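(* Let $\Gamma$ be an Arf numerical semigroup with multiplicity $e$ and conductor $c$. Let $e'\in\Gamma\setminus\{0,e\}$, $\Gamma_{e'}=\{0\}\cup(e'+\Gamma)$ and $c'=c+e'$. Then \[ \delta^2_{\Gamma_{e'}}(c'+e'+k)=\delta^2_\Gamma(c+k)+3\quad\text{for all }k\in\mathbb N. \]
   Context: A numerical semigroup is a subset $\Gamma\subseteq\mathbb N$ containing $0$, closed under addition, with finite complement; write $\Gamma=\{0=\rho_1<\rho_2<\cdots\}$; multiplicity $e=\rho_2$; conductor = least $c$ with $c+\mathbb N\subseteq\Gamma$. $\Gamma$ is Arf if $\rho_i+\rho_j-\rho_k\in\Gamma$ for all $i\ge j\ge k$. For a numerical semigroup $S$: $D_S(x)=\{s\in S:x-s\in S\}$ and $\delta^2_S(m)=\min\{|D_S(m_1)\cup D_S(m_2)|: m\le m_1<m_2,\ m_i\in S\}$. *)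

theory Defs
  imports Main
begin

definition numerical_semigroup :: "nat set \<Rightarrow> bool" where
  "numerical_semigroup S \<longleftrightarrow> 0 \<in> S \<and> (\<forall>x\<in>S. \<forall>y\<in>S. x + y \<in> S) \<and> finite (UNIV - S)"

definition Arf :: "nat set \<Rightarrow> bool" where
  "Arf S \<longleftrightarrow> (\<forall>x\<in>S. \<forall>y\<in>S. \<forall>z\<in>S. x \<ge> y \<and> y \<ge> z \<longrightarrow> x + y - z \<in> S)"

definition multiplicity_ns :: "nat set \<Rightarrow> nat" where
  "multiplicity_ns S = (LEAST x. x \<in> S \<and> x \<noteq> 0)"

definition conductor :: "nat set \<Rightarrow> nat" where
  "conductor S = (LEAST c. \<forall>n\<ge>c. n \<in> S)"

definition D_set :: "nat set \<Rightarrow> nat \<Rightarrow> nat set" where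
  "D_set S x = {s \<in> S. x \<ge> s \<and> x - s \<in> S}"

definition delta2 :: "nat set \<Rightarrow> nat \<Rightarrow> nat" where
  "delta2 S m = Inf {card (D_set S m1 \<union> D_set S m2) | m1 m2.
                      m \<le> m1 \<and> m1 < m2 \<and> m1 \<in> S \<and> m2 \<in> S}"

end

theory Submission
  imports Defs
begin

lemma D_finite: "finite (D_set S x)"
  by (rule finite_subset[of _ "{..x}"]) (auto simp: D_set_def)

lemma D_mono:
  assumes "\<forall>x\<in>S. \<forall>y\<in>S. x + y \<in> S" "p \<le> q" "q - p \<in> S"
  shows "D_set S p \<subseteq> D_set S q"
proof
  fix s assume "s \<in> D_set S p"
  hence s: "s \<in> S" "s \<le> p" "p - s \<in> S" by (auto simp: D_set_def)
  have "q - s = (p - s) + (q - p)" using s assms by simp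
  hence "q - s \<in> S" using assms s by metis
  thus "s \<in> D_set S q" using s assms by (simp add: D_set_def)
qed

theorem lemma4p13:
  fixes \<Gamma> :: "nat set" and e c e' :: nat
  assumes "numerical_semigroup \<Gamma>"
    and "Arf \<Gamma>"
    and "e = multiplicity_ns \<Gamma>"
    and "c = conductor \<Gamma>"
    and "e' \<in> \<Gamma>" and "e' \<noteq> 0" and "e' \<noteq> e"
  shows "\<forall>k::nat. delta2 ({0} \<union> (\<lambda>s. e' + s) ` \<Gamma>) (c + e' + e' + k) = delta2 \<Gamma> (c + k) + 3"
proof -
  define T where "T = {0} \<union> (\<lambda>s. e' + s) ` \<Gamma>"
  have z: "0 \<in> \<Gamma>" and cl: "\<forall>x\<in>\<Gamma>. \<forall>y\<in>\<Gamma>. x + y \<in> \<Gamma>" and fin: "finite (UNIV - \<Gamma>)"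
    using assms(1) by (auto simp: numerical_semigroup_def)
  have exN: "\<exists>N. \<forall>n\<ge>N. n \<in> \<Gamma>"
  proof -
    obtain N where "\<forall>x\<in>UNIV - \<Gamma>. x \<le> N" using fin finite_nat_set_iff_bounded_le by blast
    hence "\<forall>n\<ge>Suc N. n \<in> \<Gamma>" by force
    thus ?thesis by blast
  qed
  have condp: "\<forall>n\<ge>c. n \<in> \<Gamma>"
    unfolding assms(4) conductor_def by (rule LeastI_ex[OF exN])
  have exe: "\<exists>x. x \<in> \<Gamma> \<and> x \<noteq> 0" using condp by (intro exI[of _ "Suc c"]) auto
  have eG: "e \<in> \<Gamma>" and e0: "e \<noteq> 0"
    using LeastI_ex[OF exe] unfolding assms(3) multiplicity_ns_def by auto
  have emin: "\<And>x. x \<in> \<Gamma> \<Longrightarrow> x \<noteq> 0 \<Longrightarrow> e \<le> x"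
    unfolding assms(3) multiplicity_ns_def by (rule Least_le) simp
  have ee: "e < e'" using emin[OF assms(5,6)] assms(7) by simp
  have DT: "D_set T x = {0, x} \<union> (\<lambda>a. e' + a) ` D_set \<Gamma> (x - 2*e')" if x: "x \<ge> c + 2*e'" for x
  proof
    show "D_set T x \<subseteq> {0, x} \<union> (\<lambda>a. e' + a) ` D_set \<Gamma> (x - 2*e')"
    proof
      fix s assume "s \<in> D_set T x"
      hence s: "s \<in> T" "s \<le> x" "x - s \<in> T" by (auto simp: D_set_def)
      show "s \<in> {0, x} \<union> (\<lambda>a. e' + a) ` D_set \<Gamma> (x - 2*e')"
      proof (cases "s = 0 \<or> s = x")
        case True thus ?thesis by auto
      next
        case False
        then obtain a where a: "a \<in> \<Gamma>" "s = e' + a" using s(1) by (auto simp: T_def)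
        obtain b where b: "b \<in> \<Gamma>" "x - s = e' + b" using s(3) False s(2) by (auto simp: T_def)
        have "x - 2*e' - a = b" using a b s(2) by simp
        hence "a \<in> D_set \<Gamma> (x - 2*e')" using a b s(2) by (auto simp: D_set_def)
        thus ?thesis using a by auto
      qed
    qed
  next
    show "{0, x} \<union> (\<lambda>a. e' + a) ` D_set \<Gamma> (x - 2*e') \<subseteq> D_set T x"
    proof
      fix s assume s: "s \<in> {0, x} \<union> (\<lambda>a. e' + a) ` D_set \<Gamma> (x - 2*e')"
      have xT: "x \<in> T"
      proof -
        have "x - e' \<in> \<Gamma>" using condp x by simp
        hence "e' + (x - e') \<in> T" unfolding T_def by blast
        thus ?thesis using x by simp
      qed
      have 0: "0 \<in> T" by (simp add: T_def)
      show "s \<in> D_set T x"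
      proof (cases "s = 0 \<or> s = x")
        case True thus ?thesis using xT 0 by (auto simp: D_set_def)
      next
        case False
        then obtain a where a: "a \<in> D_set \<Gamma> (x - 2*e')" "s = e' + a" using s by auto
        hence a2: "a \<in> \<Gamma>" "a \<le> x - 2*e'" "x - 2*e' - a \<in> \<Gamma>" by (auto simp: D_set_def)
        have "x - s = e' + (x - 2*e' - a)" using a2 a x by simp
        hence "x - s \<in> T" using a2 unfolding T_def by blast
        moreover have "s \<in> T" using a a2 unfolding T_def by blast
        ultimately show ?thesis using a a2 x by (simp add: D_set_def)
      qed
    qed
  qed
  have cardT: "card (D_set T (n1 + 2*e') \<union> D_set T (n2 + 2*e')) =
      (if n1 + e' \<le> n2 \<and> n2 - n1 - e' \<in> \<Gamma> then 2 else 3) + card (D_set \<Gamma> n1 \<union> D_set \<Gamma> n2)"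
    if n: "c \<le> n1" "n1 < n2" for n1 n2
  proof -
    define B where "B = (\<lambda>a. e' + a) ` (D_set \<Gamma> n1 \<union> D_set \<Gamma> n2)"
    have eq: "D_set T (n1 + 2*e') \<union> D_set T (n2 + 2*e') = insert 0 (insert (n2+2*e') (insert (n1+2*e') B))"
      using DT[of "n1+2*e'"] DT[of "n2+2*e'"] n unfolding B_def by auto
    have finB: "finite B" unfolding B_def using D_finite by blast
    have cB: "card B = card (D_set \<Gamma> n1 \<union> D_set \<Gamma> n2)"
      unfolding B_def by (rule card_image) (simp add: inj_on_def)
    have B2: "n2 + 2*e' \<notin> B" unfolding B_def using n assms(6) by (auto simp: D_set_def)
    have B0: "0 \<notin> B" unfolding B_def using assms(6) by auto
    have B1: "(n1 + 2*e' \<in> B) = (n1 + e' \<le> n2 \<and> n2 - n1 - e' \<in> \<Gamma>)"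
    proof
      assume "n1 + 2*e' \<in> B"
      then obtain a where "a \<in> D_set \<Gamma> n1 \<union> D_set \<Gamma> n2" "n1 + 2*e' = e' + a" unfolding B_def by blast
      thus "n1 + e' \<le> n2 \<and> n2 - n1 - e' \<in> \<Gamma>" using assms(6) by (auto simp: D_set_def add.commute)
    next
      assume h: "n1 + e' \<le> n2 \<and> n2 - n1 - e' \<in> \<Gamma>"
      have "n1 + e' \<in> \<Gamma>" using condp n by simp
      hence "n1 + e' \<in> D_set \<Gamma> n2" using h by (simp add: D_set_def diff_diff_add)
      hence "e' + (n1 + e') \<in> B" unfolding B_def by blast
      thus "n1 + 2*e' \<in> B" by (metis mult_2 add.commute add.left_commute)
    qed
    have ne: "0 \<noteq> n2 + 2*e'" "0 \<noteq> n1 + 2*e'" "n1 + 2*e' \<noteq> n2 + 2*e'" using assms(6) n by auto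
    show ?thesis unfolding eq using finB B0 B1 B2 ne cB
      by (simp add: card_insert_if)
  qed
  have Dlt: "card (D_set \<Gamma> (n + e)) < card (D_set \<Gamma> (n + e'))" if n: "c \<le> n" for n
  proof -
    define \<phi> where "\<phi> = (\<lambda>s::nat. if s = 0 then 0 else s + e' - e)"
    have "\<phi> ` D_set \<Gamma> (n + e) \<subseteq> D_set \<Gamma> (n + e') - {e}"
    proof
      fix t assume "t \<in> \<phi> ` D_set \<Gamma> (n + e)"
      then obtain s where s: "s \<in> D_set \<Gamma> (n + e)" "t = \<phi> s" by auto
      hence s2: "s \<in> \<Gamma>" "s \<le> n + e" "n + e - s \<in> \<Gamma>" by (auto simp: D_set_def)
      show "t \<in> D_set \<Gamma> (n + e') - {e}"
      proof (cases "s = 0")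
        case True
        have "n + e' \<in> \<Gamma>" using condp n by simp
        thus ?thesis using True s e0 z by (simp add: \<phi>_def D_set_def)
      next
        case False
        have es: "e \<le> s" using emin[OF s2(1) False] .
        have "s + e' - e \<in> \<Gamma>"
        proof (cases "s \<le> e'")
          case True
          hence "e' + s - e \<in> \<Gamma>" using assms(2) assms(5) s2(1) eG es unfolding Arf_def by blast
          thus ?thesis by (simp add: add.commute)
        next
          case False
          thus ?thesis using assms(2) assms(5) s2(1) eG ee unfolding Arf_def by simp
        qed
        moreover have "n + e' - (s + e' - e) = n + e - s" using es ee s2 by simp
        moreover have "s + e' - e \<le> n + e'" "s + e' - e \<noteq> e" using s2 es ee by linarith+
        ultimately show ?thesis using False s s2 es ee by (simp add: \<phi>_def D_set_def)
      qed
    qed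
    moreover have "inj_on \<phi> (D_set \<Gamma> (n + e))"
    proof (rule inj_onI)
      fix x y assume "x \<in> D_set \<Gamma> (n + e)" "y \<in> D_set \<Gamma> (n + e)" "\<phi> x = \<phi> y"
      thus "x = y" unfolding \<phi>_def using ee by (auto split: if_splits)
    qed
    ultimately have "card (D_set \<Gamma> (n + e)) \<le> card (D_set \<Gamma> (n + e') - {e})"
      using card_inj_on_le D_finite by (metis finite_Diff)
    moreover have "e \<in> D_set \<Gamma> (n + e')"
    proof -
      have "n + e' - e \<in> \<Gamma>" using condp n ee by simp
      thus ?thesis using eG ee by (simp add: D_set_def)
    qed
    ultimately show ?thesis using D_finite
      by (metis card_Diff1_less order_le_less_trans)
  qed
  have badlt: "card (D_set \<Gamma> n1 \<union> D_set \<Gamma> (n1 + e)) < card (D_set \<Gamma> n1 \<union> D_set \<Gamma> n2)"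
    if n: "c \<le> n1" "n1 + e' \<le> n2" "n2 - n1 - e' \<in> \<Gamma>" for n1 n2
  proof -
    have "D_set \<Gamma> n1 \<subseteq> D_set \<Gamma> (n1 + e)" using D_mono[OF cl, of n1 "n1+e"] eG by simp
    hence 1: "D_set \<Gamma> n1 \<union> D_set \<Gamma> (n1 + e) = D_set \<Gamma> (n1 + e)" by blast
    have "n2 - n1 \<in> \<Gamma>"
    proof -
      have "n2 - n1 = e' + (n2 - n1 - e')" using n by simp
      thus ?thesis using cl assms(5) n by metis
    qed
    hence "D_set \<Gamma> n1 \<subseteq> D_set \<Gamma> n2" using D_mono[OF cl, of n1 n2] n by simp
    hence 2: "D_set \<Gamma> n1 \<union> D_set \<Gamma> n2 = D_set \<Gamma> n2" by blast
    have "D_set \<Gamma> (n1 + e') \<subseteq> D_set \<Gamma> n2" using D_mono[OF cl, of "n1+e'" n2] n by (simp add: diff_diff_add)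
    hence "card (D_set \<Gamma> (n1 + e')) \<le> card (D_set \<Gamma> n2)" using D_finite card_mono by blast
    thus ?thesis unfolding 1 2 using Dlt[OF n(1)] by simp
  qed
  show ?thesis
  proof
    fix k :: nat
    define AG where "AG = {card (D_set \<Gamma> m1 \<union> D_set \<Gamma> m2) | m1 m2.
                      c + k \<le> m1 \<and> m1 < m2 \<and> m1 \<in> \<Gamma> \<and> m2 \<in> \<Gamma>}"
    define AT where "AT = {card (D_set T m1 \<union> D_set T m2) | m1 m2.
                      c + e' + e' + k \<le> m1 \<and> m1 < m2 \<and> m1 \<in> T \<and> m2 \<in> T}"
    have "card (D_set \<Gamma> (c+k) \<union> D_set \<Gamma> (c+k+1)) \<in> AG"
      unfolding AG_def using condp by force
    hence "Inf AG \<in> AG" by (metis Inf_nat_def LeastI)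
    then obtain p q where pq: "Inf AG = card (D_set \<Gamma> p \<union> D_set \<Gamma> q)" "c + k \<le> p" "p < q"
      "p \<in> \<Gamma>" "q \<in> \<Gamma>" unfolding AG_def by blast
    have lowAG: "Inf AG \<le> card (D_set \<Gamma> m1 \<union> D_set \<Gamma> m2)" if "c + k \<le> m1" "m1 < m2" for m1 m2
    proof -
      have "card (D_set \<Gamma> m1 \<union> D_set \<Gamma> m2) \<in> AG" unfolding AG_def using that condp by force
      thus ?thesis by (simp add: cInf_lower)
    qed
    have good: "\<not> (p + e' \<le> q \<and> q - p - e' \<in> \<Gamma>)"
    proof
      assume h: "p + e' \<le> q \<and> q - p - e' \<in> \<Gamma>"
      have "card (D_set \<Gamma> p \<union> D_set \<Gamma> (p + e)) < Inf AG"
        using badlt[of p q] h pq by simp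
      moreover have "Inf AG \<le> card (D_set \<Gamma> p \<union> D_set \<Gamma> (p + e))"
        using lowAG[of p "p+e"] pq e0 by simp
      ultimately show False by simp
    qed
    have inAT: "Inf AG + 3 \<in> AT"
    proof -
      have "card (D_set T (p + 2*e') \<union> D_set T (q + 2*e')) = Inf AG + 3"
        using cardT[of p q] pq good by simp
      moreover have "p + 2*e' \<in> T" "q + 2*e' \<in> T"
      proof -
        have "p + e' \<in> \<Gamma>" "q + e' \<in> \<Gamma>" using condp pq by auto
        hence "e' + (p + e') \<in> T" "e' + (q + e') \<in> T" unfolding T_def by blast+
        thus "p + 2*e' \<in> T" "q + 2*e' \<in> T" by (metis mult_2 add.commute add.left_commute)+
      qed
      ultimately show ?thesis unfolding AT_def using pq
        by (smt (verit) add_le_mono1 add_less_mono1 mem_Collect_eq mult_2 add.assoc add.commute)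
    qed
    have lowAT: "Inf AG + 3 \<le> u" if "u \<in> AT" for u
    proof -
      obtain m1 m2 where m: "u = card (D_set T m1 \<union> D_set T m2)" "c + e' + e' + k \<le> m1" "m1 < m2"
        using \<open>u \<in> AT\<close> unfolding AT_def by blast
      define n1 where "n1 = m1 - 2*e'"
      define n2 where "n2 = m2 - 2*e'"
      have n: "c \<le> n1" "n1 < n2" "c + k \<le> n1" "m1 = n1 + 2*e'" "m2 = n2 + 2*e'"
        using m unfolding n1_def n2_def by auto
      have u: "u = (if n1 + e' \<le> n2 \<and> n2 - n1 - e' \<in> \<Gamma> then 2 else 3) + card (D_set \<Gamma> n1 \<union> D_set \<Gamma> n2)"
        using cardT[OF n(1,2)] m(1) n(4,5) by simp
      show ?thesis
      proof (cases "n1 + e' \<le> n2 \<and> n2 - n1 - e' \<in> \<Gamma>")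
        case True
        have "card (D_set \<Gamma> n1 \<union> D_set \<Gamma> (n1 + e)) < card (D_set \<Gamma> n1 \<union> D_set \<Gamma> n2)"
          using badlt[of n1 n2] True n by simp
        moreover have "Inf AG \<le> card (D_set \<Gamma> n1 \<union> D_set \<Gamma> (n1 + e))"
          using lowAG[of n1 "n1+e"] n e0 by simp
        ultimately show ?thesis using u True by simp
      next
        case False
        have "u = 3 + card (D_set \<Gamma> n1 \<union> D_set \<Gamma> n2)" using u False by (simp only: if_False)
        thus ?thesis using lowAG[of n1 n2] n by simp
      qed
    qed
    have "Inf AT = Inf AG + 3" 
      using inAT lowAT by (rule cInf_eq_minimum)
    thus "delta2 ({0} \<union> (\<lambda>s. e' + s) ` \<Gamma>) (c + e' + e' + k) = delta2 \<Gamma> (c + k) + 3"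
      unfolding delta2_def AT_def AG_def T_def by simp
  qed
qed

end
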